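(* Let $r:\tilde Q\to\mathbb R$ be a function such that equation (E-IV)(a) holds at every $(K,L,M)\in\tilde Q$ with $K+M<0$ and $L+M<0$. If $r>0$ at all points of $\tilde Q$ lying in the plane $K+M=0$ or in the plane $L+M=0$, then $r>0$ on all of $\tilde Q$.
   Context: $\tilde Q=\{(K,L,M)\in\mathbb Z^3: L+M\le0,\ K+M\le0,\ K+L\ge0\}$. Fix $\alpha_1,\alpha_2,\alpha_3>0$ with $\alpha_1+\alpha_2+\alpha_3=\pi$. Equation (E-IV)(a) at $(K,L,M)$: with $r=r(K,L,M)$, $r_1=r(K,L+1,M)$, $r_2=r(K,L,M+1)$, $r_3=r(K+1,L,M)$, $r(r_1\sin\alpha_3+r_2\sin\alpha_1+r_3\sin\alpha_2)=r_1r_2\sin\alpha_2+r_2r_3\sin\alpha_3+r_3r_1\sin\alpha_1$. *)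

theory Defs
  imports Complex_Main
begin

definition Qt :: "(int \<times> int \<times> int) set" where
  "Qt = {(K, L, M). L + M \<le> 0 \<and> K + M \<le> 0 \<and> K + L \<ge> 0}"

definition EIVa :: "real \<Rightarrow> real \<Rightarrow> real \<Rightarrow> (int \<times> int \<times> int \<Rightarrow> real) \<Rightarrow> int \<Rightarrow> int \<Rightarrow> int \<Rightarrow> bool" where
  "EIVa a1 a2 a3 r K L M \<longleftrightarrow>
     (let r0 = r (K, L, M); r1 = r (K, L + 1, M); r2 = r (K, L, M + 1); r3 = r (K + 1, L, M)
      in r0 * (r1 * sin a3 + r2 * sin a1 + r3 * sin a2)
         = r1 * r2 * sin a2 + r2 * r3 * sin a3 + r3 * r1 * sin a1)"

end

theory Submission
  imports Defs
begin

theorem lemma3: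
  fixes a1 a2 a3 :: real and r :: "int \<times> int \<times> int \<Rightarrow> real"
  assumes "a1 > 0" and "a2 > 0" and "a3 > 0" and "a1 + a2 + a3 = pi"
    and "\<And>K L M. (K, L, M) \<in> Qt \<Longrightarrow> K + M < 0 \<Longrightarrow> L + M < 0 \<Longrightarrow> EIVa a1 a2 a3 r K L M"
    and "\<And>K L M. (K, L, M) \<in> Qt \<Longrightarrow> K + M = 0 \<or> L + M = 0 \<Longrightarrow> r (K, L, M) > 0"
  shows "\<forall>p \<in> Qt. r p > 0"
proof -
  have s1: "sin a1 > 0" using assms(1-4) by (intro sin_gt_zero) auto
  have s2: "sin a2 > 0" using assms(1-4) by (intro sin_gt_zero) auto
  have s3: "sin a3 > 0" using assms(1-4) by (intro sin_gt_zero) auto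
  have main: "\<forall>K L M. nat (-K-L-2*M) = n \<longrightarrow> (K,L,M) \<in> Qt \<longrightarrow> r (K,L,M) > 0" for n
  proof (induction n rule: less_induct)
    case (less n)
    show ?case
    proof (intro allI impI)
      fix K L M assume n: "nat (-K-L-2*M) = n" and q: "(K,L,M) \<in> Qt"
      show "r (K,L,M) > 0"
      proof (cases "K + M = 0 \<or> L + M = 0")
        case True thus ?thesis using assms(6) q by blast
      next
        case False
        hence km: "K + M < 0" and lm: "L + M < 0" using q by (auto simp: Qt_def)
        have r1: "r (K, L+1, M) > 0"
          using less.IH[of "nat (-K-(L+1)-2*M)"] n q km lm by (auto simp: Qt_def)
        have r2: "r (K, L, M+1) > 0"
          using less.IH[of "nat (-K-L-2*(M+1))"] n q km lm by (auto simp: Qt_def)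
        have r3: "r (K+1, L, M) > 0"
          using less.IH[of "nat (-(K+1)-L-2*M)"] n q km lm by (auto simp: Qt_def)
        have E: "r (K,L,M) * (r (K, L+1, M) * sin a3 + r (K, L, M+1) * sin a1 + r (K+1, L, M) * sin a2)
          = r (K, L+1, M) * r (K, L, M+1) * sin a2 + r (K, L, M+1) * r (K+1, L, M) * sin a3
            + r (K+1, L, M) * r (K, L+1, M) * sin a1"
          using assms(5)[OF q km lm] by (simp add: EIVa_def Let_def)
        have S: "r (K, L+1, M) * sin a3 + r (K, L, M+1) * sin a1 + r (K+1, L, M) * sin a2 > 0"
          using r1 r2 r3 s1 s2 s3 by (intro add_pos_pos mult_pos_pos) auto
        have P: "r (K, L+1, M) * r (K, L, M+1) * sin a2 + r (K, L, M+1) * r (K+1, L, M) * sin a3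
            + r (K+1, L, M) * r (K, L+1, M) * sin a1 > 0"
          using r1 r2 r3 s1 s2 s3 by (intro add_pos_pos mult_pos_pos) auto
        show ?thesis using E S P by (metis zero_less_mult_pos2 mult.commute)
      qed
    qed
  qed
  show ?thesis using main by auto
qed

end
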